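(* Under the hypotheses of the consensus error recursion (SGP with Assumptions (1)–(4), and the almost-sure bound $\|\bar{x}^{(t)}-z_i^{(t)}\|\le Cq^tX_0+\eta C\sum_{s=0}^tq^{t-s}\max_j\|g_j(z_j^{(s)};\xi_j^{(s)})\|$ for all $t\ge0$ and $i$, with $X_0=\max_m\|x_m^{(0)}\|$), let $M^{(t)}:=\frac1n\sum_{i=1}^n\mathbb{E}\|\bar{x}^{(t)}-z_i^{(t)}\|^2$ and $P:=1-\frac{9\eta^2C^2L^2n}{(1-q)^2}$. If $P>0$, then for every $T\ge1$, $$\sum_{t=0}^{T-1}M^{(t)}\le\frac{3C^2}{P(1-q)^2}X_0^2+\frac{3\eta^2C^2n\sigma^2}{P(1-q)^2}T+\frac{9\eta^2C^2n\zeta^2}{P(1-q)^2}T+\frac{9\eta^2C^2}{P(1-q)^2}\sum_{t=0}^{T-1}\mathbb{E}\|\nabla f(\bar{x}^{(t)})\|^2.$$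
   Context: Setting (SGP). Nodes $V=\{1,\dots,n\}$, $n\ge2$, base topology $G=(V,E)$ bidirected with self-loops; local objectives $f_i$, $f=\frac1n\sum_i f_i$; stochastic gradients $g_i(x;\xi)$ with fresh independent minibatches. SGP with nonnegative column-stochastic mixing matrices $W^{(t)}$ ($W^{(t)}_{ij}\ne0$ only if $(j,i)\in E$): $x_i^{(t+1)}=\sum_j W^{(t)}_{ij}(x_j^{(t)}-\eta g_j(z_j^{(t)};\xi_j^{(t)}))$, $w_i^{(t+1)}=\sum_jW^{(t)}_{ij}w_j^{(t)}$, $w_i^{(0)}=1$, $z_i^{(t)}=x_i^{(t)}/w_i^{(t)}$, $\bar{x}^{(t)}=\frac1n\sum_ix_i^{(t)}$. $E^{(t)}=\{(j,i)\in E:W^{(t)}_{ij}\ne0\}$, $\delta=\min_t\min_{W^{(t)}_{ij}>0}W^{(t)}_{ij}$. Assumptions: (1) each $f_i$ is $L$-smooth; (2) $\mathbb{E}\|g_i(x;\xi)-\nabla f_i(x)\|^2\le\sigma^2$ for all $i,x$; (3) $\frac1n\sum_i\|\nabla f_i(x)-\nabla f(x)\|^2\le\zeta^2$ for all $x$; (4) positive integers $B,\Delta$ exist with $(V,\bigcup_{t=lB}^{(l+1)B-1}E^{(t)})$ strongly connected of diameter at most $\Delta$ for every $l\in\mathbb{N}$. Constants: $C=4/\delta^{\Delta B}$ and $q=(1-\delta^{\Delta B})^{1/(\Delta B)}\in(0,1)$. *)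

theory Defs
  imports "HOL-Probability.Probability"
begin

text \<open>Nodes are indexed by {..<n} (i.e. 0..n-1 instead of 1..n).
  An edge (j,i) is directed from j to i.\<close>

definition active_edges :: "(nat \<times> nat) set \<Rightarrow> (nat \<Rightarrow> nat \<Rightarrow> nat \<Rightarrow> real) \<Rightarrow> nat \<Rightarrow> (nat \<times> nat) set" where
  "active_edges E W t = {(j, i). (j, i) \<in> E \<and> W t i j \<noteq> 0}"

definition strongly_connected_diam_le :: "nat set \<Rightarrow> (nat \<times> nat) set \<Rightarrow> nat \<Rightarrow> bool" where
  "strongly_connected_diam_le V R D \<longleftrightarrow>
     R \<subseteq> V \<times> V \<and> (\<forall>i\<in>V. \<forall>j\<in>V. \<exists>k\<le>D. (i, j) \<in> R ^^ k)"

end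

theory Submission
  imports Defs
begin

lemma indep_bound:
  fixes X :: "'i \<Rightarrow> 'a \<Rightarrow> 'b" and \<phi> :: "('i \<Rightarrow> 'b) \<Rightarrow> 'd::euclidean_space"
    and H :: "'d \<Rightarrow> 'b \<Rightarrow> ennreal"
  assumes prob: "prob_space M"
    and ind: "prob_space.indep_vars M (\<lambda>_. S) X II"
    and A: "A \<subseteq> II" and p: "p \<in> II" "p \<notin> A"
    and \<phi>: "\<phi> \<in> borel_measurable (PiM A (\<lambda>_. S))"
    and H: "case_prod H \<in> borel_measurable (borel \<Otimes>\<^sub>M S)"
    and bnd: "\<And>y. (\<integral>\<^sup>+ \<omega>. H y (X p \<omega>) \<partial>M) \<le> c"
  shows "(\<integral>\<^sup>+ \<omega>. H (\<phi> (restrict (\<lambda>i. X i \<omega>) A)) (X p \<omega>) \<partial>M) \<le> c"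
proof -
  interpret prob_space M by (rule prob)
  define U where "U = (\<lambda>\<omega>. restrict (\<lambda>i. X i \<omega>) A)"
  define V where "V = (\<lambda>\<omega>. restrict (\<lambda>i. X i \<omega>) {p})"
  have i1: "indep_var (PiM A (\<lambda>_. S)) U (PiM {p} (\<lambda>_. S)) V"
    unfolding U_def V_def using ind A p by (intro indep_var_restrict) auto
  then have rvU: "random_variable (PiM A (\<lambda>_. S)) U" and rvV: "random_variable (PiM {p} (\<lambda>_. S)) V"
    and deq: "distr M (PiM A (\<lambda>_. S)) U \<Otimes>\<^sub>M distr M (PiM {p} (\<lambda>_. S)) V = distr M (PiM A (\<lambda>_. S) \<Otimes>\<^sub>M PiM {p} (\<lambda>_. S)) (\<lambda>x. (U x, V x))"
    using indep_var_distribution_eq by blast+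
  interpret PU: prob_space "distr M (PiM A (\<lambda>_. S)) U" by (rule prob_space_distr[OF rvU])
  interpret PV: prob_space "distr M (PiM {p} (\<lambda>_. S)) V" by (rule prob_space_distr[OF rvV])
  define H' where "H' = (\<lambda>(u::'i\<Rightarrow>'b, v::'i\<Rightarrow>'b). H (\<phi> u) (v p))"
  have H'm: "H' \<in> borel_measurable (PiM A (\<lambda>_. S) \<Otimes>\<^sub>M PiM {p} (\<lambda>_. S))"
  proof -
    have "(\<lambda>z. (\<phi> (fst z), snd z p)) \<in> (PiM A (\<lambda>_. S) \<Otimes>\<^sub>M PiM {p} (\<lambda>_. S)) \<rightarrow>\<^sub>M (borel \<Otimes>\<^sub>M S)"
      using \<phi> by (intro measurable_Pair) (auto intro: measurable_compose[OF measurable_fst] measurable_compose[OF measurable_snd] measurable_component_singleton)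
    from measurable_comp[OF this H] show ?thesis by (simp add: H'_def o_def case_prod_beta)
  qed
  have "(\<integral>\<^sup>+ \<omega>. H (\<phi> (U \<omega>)) (X p \<omega>) \<partial>M) = (\<integral>\<^sup>+ \<omega>. H' (U \<omega>, V \<omega>) \<partial>M)"
    by (simp add: H'_def V_def)
  also have "\<dots> = (\<integral>\<^sup>+ z. H' z \<partial>distr M (PiM A (\<lambda>_. S) \<Otimes>\<^sub>M PiM {p} (\<lambda>_. S)) (\<lambda>x. (U x, V x)))"
    using H'm rvU rvV by (subst nn_integral_distr) (auto intro: measurable_Pair)
  also have "\<dots> = (\<integral>\<^sup>+ z. H' z \<partial>(distr M (PiM A (\<lambda>_. S)) U \<Otimes>\<^sub>M distr M (PiM {p} (\<lambda>_. S)) V))"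
    by (simp add: deq)
  also have "\<dots> = (\<integral>\<^sup>+ y. \<integral>\<^sup>+ b. H' (y, b) \<partial>distr M (PiM {p} (\<lambda>_. S)) V \<partial>distr M (PiM A (\<lambda>_. S)) U)"
    using H'm by (subst PV.nn_integral_fst[symmetric]) auto
  also have "\<dots> \<le> (\<integral>\<^sup>+ y. c \<partial>distr M (PiM A (\<lambda>_. S)) U)"
  proof (rule nn_integral_mono)
    fix y
    have m: "(\<lambda>b. H' (y, b)) \<in> borel_measurable (PiM {p} (\<lambda>_. S))"
    proof -
      have "(\<lambda>b. (\<phi> y, b p)) \<in> PiM {p} (\<lambda>_. S) \<rightarrow>\<^sub>M borel \<Otimes>\<^sub>M S"
        by (intro measurable_Pair) (auto intro: measurable_component_singleton)
      from measurable_comp[OF this H] show ?thesis by (simp add: H'_def o_def)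
    qed
    have "(\<integral>\<^sup>+ b. H' (y, b) \<partial>distr M (PiM {p} (\<lambda>_. S)) V) = (\<integral>\<^sup>+ \<omega>. H' (y, V \<omega>) \<partial>M)"
      using m rvV by (subst nn_integral_distr) auto
    also have "\<dots> = (\<integral>\<^sup>+ \<omega>. H (\<phi> y) (X p \<omega>) \<partial>M)" by (simp add: H'_def V_def)
    finally show "(\<integral>\<^sup>+ b. H' (y, b) \<partial>distr M (PiM {p} (\<lambda>_. S)) V) \<le> c" using bnd by simp
  qed
  also have "\<dots> = c" using PU.emeasure_space_1 by simp
  finally show ?thesis by (simp add: U_def)
qed

primrec Fx :: "nat \<Rightarrow> (nat \<Rightarrow> nat \<Rightarrow> nat \<Rightarrow> real) \<Rightarrow> (nat \<Rightarrow> 'd::real_vector) \<Rightarrow> real \<Rightarrow> (nat \<Rightarrow> 'd \<Rightarrow> 'b \<Rightarrow> 'd) \<Rightarrow> (nat \<Rightarrow> nat \<Rightarrow> real) \<Rightarrow> nat \<Rightarrow> nat \<Rightarrow> (nat \<times> nat \<Rightarrow> 'b) \<Rightarrow> 'd" where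
  "Fx n W x0 \<eta> g w 0 i v = x0 i"
| "Fx n W x0 \<eta> g w (Suc t) i v = (\<Sum>j<n. W t i j *\<^sub>R (Fx n W x0 \<eta> g w t j v - \<eta> *\<^sub>R g j ((1 / w t j) *\<^sub>R Fx n W x0 \<eta> g w t j v) (v (j, t))))"

lemma Fx_cong:
  "(\<And>j r. j < n \<Longrightarrow> r < t \<Longrightarrow> v (j, r) = v' (j, r)) \<Longrightarrow> Fx n W x0 \<eta> g w t i v = Fx n W x0 \<eta> g w t i v'"
proof (induction t arbitrary: i)
  case 0 then show ?case by simp
next
  case (Suc t)
  have "\<And>j. Fx n W x0 \<eta> g w t j v = Fx n W x0 \<eta> g w t j v'" using Suc by auto
  moreover have "\<And>j. j < n \<Longrightarrow> v (j, t) = v' (j, t)" using Suc by auto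
  ultimately show ?case by (auto intro!: sum.cong)
qed

lemma Fx_meas:
  fixes g :: "nat \<Rightarrow> 'd::euclidean_space \<Rightarrow> 'b \<Rightarrow> 'd"
  assumes gm: "\<And>j. j < n \<Longrightarrow> (\<lambda>(y, b). g j y b) \<in> borel \<Otimes>\<^sub>M S \<rightarrow>\<^sub>M borel"
    and I: "{..<n} \<times> {..<t} \<subseteq> I"
  shows "Fx n W x0 \<eta> g w t i \<in> borel_measurable (PiM I (\<lambda>_. S))"
  using I
proof (induction t arbitrary: i)
  case 0 then show ?case by simp
next
  case (Suc t)
  have IH: "\<And>j. Fx n W x0 \<eta> g w t j \<in> borel_measurable (PiM I (\<lambda>_. S))"
    using Suc by force
  have "(\<lambda>v. g j ((1 / w t j) *\<^sub>R Fx n W x0 \<eta> g w t j v) (v (j, t))) \<in> borel_measurable (PiM I (\<lambda>_. S))"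
    if j: "j < n" for j
  proof -
    have jt: "(j, t) \<in> I" using Suc.prems j by auto
    have "(\<lambda>v. ((1 / w t j) *\<^sub>R Fx n W x0 \<eta> g w t j v, v (j, t))) \<in> PiM I (\<lambda>_. S) \<rightarrow>\<^sub>M borel \<Otimes>\<^sub>M S"
      using IH jt by (intro measurable_Pair) (auto intro: measurable_component_singleton)
    from measurable_compose[OF this gm[OF j]] show ?thesis by simp
  qed
  then show ?case using IH by simp
qed

definition sqf :: "'a measure \<Rightarrow> ('a \<Rightarrow> 'd::euclidean_space) \<Rightarrow> bool" where
  "sqf M Y \<longleftrightarrow> Y \<in> borel_measurable M \<and> (\<integral>\<^sup>+ \<omega>. ennreal ((norm (Y \<omega>))\<^sup>2) \<partial>M) < \<infinity>"

lemma sqf_const: "prob_space M \<Longrightarrow> sqf M (\<lambda>_. c)"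
  unfolding sqf_def by (simp add: prob_space.emeasure_space_1)

lemma sqf_cong: "sqf M Y \<Longrightarrow> (\<And>\<omega>. \<omega> \<in> space M \<Longrightarrow> Y \<omega> = Y' \<omega>) \<Longrightarrow> sqf M Y'"
  unfolding sqf_def
proof (elim conjE, intro conjI)
  assume m: "Y \<in> borel_measurable M" and f: "(\<integral>\<^sup>+ \<omega>. ennreal ((norm (Y \<omega>))\<^sup>2) \<partial>M) < \<infinity>"
    and e: "\<And>\<omega>. \<omega> \<in> space M \<Longrightarrow> Y \<omega> = Y' \<omega>"
  show "Y' \<in> borel_measurable M" using m e measurable_cong by force
  have "(\<integral>\<^sup>+ \<omega>. ennreal ((norm (Y' \<omega>))\<^sup>2) \<partial>M) = (\<integral>\<^sup>+ \<omega>. ennreal ((norm (Y \<omega>))\<^sup>2) \<partial>M)"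
    using e by (intro nn_integral_cong) simp
  then show "(\<integral>\<^sup>+ \<omega>. ennreal ((norm (Y' \<omega>))\<^sup>2) \<partial>M) < \<infinity>" using f by simp
qed

lemma sqf_dom:
  assumes "sqf M Y" "Y' \<in> borel_measurable M" "\<And>\<omega>. \<omega> \<in> space M \<Longrightarrow> norm (Y' \<omega>) \<le> c * norm (Y \<omega>)"
  shows "sqf M Y'"
proof -
  have "(\<integral>\<^sup>+ \<omega>. ennreal ((norm (Y' \<omega>))\<^sup>2) \<partial>M) \<le> (\<integral>\<^sup>+ \<omega>. ennreal (c\<^sup>2) * ennreal ((norm (Y \<omega>))\<^sup>2) \<partial>M)"
  proof (rule nn_integral_mono)
    fix \<omega> assume "\<omega> \<in> space M"
    then have "norm (Y' \<omega>) \<le> c * norm (Y \<omega>)" using assms by auto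
    then have "(norm (Y' \<omega>))\<^sup>2 \<le> (c * norm (Y \<omega>))\<^sup>2" by (intro power_mono) auto
    then show "ennreal ((norm (Y' \<omega>))\<^sup>2) \<le> ennreal (c\<^sup>2) * ennreal ((norm (Y \<omega>))\<^sup>2)"
      by (simp add: ennreal_mult[symmetric] power_mult_distrib)
  qed
  also have "\<dots> = ennreal (c\<^sup>2) * (\<integral>\<^sup>+ \<omega>. ennreal ((norm (Y \<omega>))\<^sup>2) \<partial>M)"
    using assms(1) unfolding sqf_def by (intro nn_integral_cmult) auto
  also have "\<dots> < \<infinity>" using assms(1) unfolding sqf_def by (simp add: ennreal_mult_less_top)
  finally show ?thesis using assms unfolding sqf_def by auto
qed

lemma sqf_scale: "sqf M Y \<Longrightarrow> sqf M (\<lambda>\<omega>. c *\<^sub>R Y \<omega>)"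
  by (rule sqf_dom[where c="\<bar>c\<bar>"]) (auto simp: sqf_def)

lemma sqf_add:
  assumes a: "sqf M Y" and b: "sqf M Y'"
  shows "sqf M (\<lambda>\<omega>. Y \<omega> + Y' \<omega>)"
proof -
  have "(\<integral>\<^sup>+ \<omega>. ennreal ((norm (Y \<omega> + Y' \<omega>))\<^sup>2) \<partial>M) \<le>
        (\<integral>\<^sup>+ \<omega>. ennreal (2 * (norm (Y \<omega>))\<^sup>2 + 2 * (norm (Y' \<omega>))\<^sup>2) \<partial>M)"
  proof (rule nn_integral_mono)
    fix \<omega>
    have "(norm (Y \<omega> + Y' \<omega>))\<^sup>2 \<le> (norm (Y \<omega>) + norm (Y' \<omega>))\<^sup>2"
      by (intro power_mono norm_triangle_ineq) auto
    also have "\<dots> \<le> 2 * (norm (Y \<omega>))\<^sup>2 + 2 * (norm (Y' \<omega>))\<^sup>2"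
      using zero_le_power2[of "norm (Y \<omega>) - norm (Y' \<omega>)"] unfolding power2_sum power2_diff by linarith
    finally show "ennreal ((norm (Y \<omega> + Y' \<omega>))\<^sup>2) \<le> ennreal (2 * (norm (Y \<omega>))\<^sup>2 + 2 * (norm (Y' \<omega>))\<^sup>2)"
      by (rule ennreal_leI)
  qed
  also have "\<dots> = (\<integral>\<^sup>+ \<omega>. 2 * ennreal ((norm (Y \<omega>))\<^sup>2) + 2 * ennreal ((norm (Y' \<omega>))\<^sup>2) \<partial>M)"
    by (intro nn_integral_cong) (subst ennreal_plus, auto simp: ennreal_mult)
  also have "\<dots> = 2 * (\<integral>\<^sup>+ \<omega>. ennreal ((norm (Y \<omega>))\<^sup>2) \<partial>M) + 2 * (\<integral>\<^sup>+ \<omega>. ennreal ((norm (Y' \<omega>))\<^sup>2) \<partial>M)"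
  proof -
    have [measurable]: "Y \<in> borel_measurable M" "Y' \<in> borel_measurable M" using a b by (auto simp: sqf_def)
    have ma: "(\<lambda>\<omega>. ennreal ((norm (Y \<omega>))\<^sup>2)) \<in> borel_measurable M" by measurable
    have mb: "(\<lambda>\<omega>. ennreal ((norm (Y' \<omega>))\<^sup>2)) \<in> borel_measurable M" by measurable
    show ?thesis using ma mb by (simp add: nn_integral_add nn_integral_cmult)
  qed
  also have "\<dots> < \<infinity>" using a b unfolding sqf_def by (simp add: ennreal_mult_less_top)
  finally show ?thesis using a b unfolding sqf_def by (auto intro: borel_measurable_add)
qed

lemma sqf_diff: "sqf M Y \<Longrightarrow> sqf M Y' \<Longrightarrow> sqf M (\<lambda>\<omega>. Y \<omega> - Y' \<omega>)"
  using sqf_add[of M Y "\<lambda>\<omega>. (-1) *\<^sub>R Y' \<omega>"] sqf_scale[of M Y' "-1"] by simp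

lemma sqf_sum: "prob_space M \<Longrightarrow> (\<And>i. i \<in> I \<Longrightarrow> sqf M (Y i)) \<Longrightarrow> sqf M (\<lambda>\<omega>. \<Sum>i\<in>I. Y i \<omega>)"
  by (induction I rule: infinite_finite_induct) (auto intro: sqf_const sqf_add)

lemma sqf_bound: "Y \<in> borel_measurable M \<Longrightarrow> (\<integral>\<^sup>+ \<omega>. ennreal ((norm (Y \<omega>))\<^sup>2) \<partial>M) \<le> ennreal c \<Longrightarrow> sqf M Y"
  unfolding sqf_def using order.strict_trans1[OF _ ennreal_less_top[of c]] by auto

lemma wcs:
  fixes a G :: "nat \<Rightarrow> real"
  assumes "\<And>i. i \<in> I \<Longrightarrow> a i \<ge> 0"
  shows "(\<Sum>i\<in>I. a i * G i)\<^sup>2 \<le> (\<Sum>i\<in>I. a i) * (\<Sum>i\<in>I. a i * (G i)\<^sup>2)"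
proof -
  have "(\<Sum>i\<in>I. a i * G i)\<^sup>2 = (\<Sum>i\<in>I. sqrt (a i) * (sqrt (a i) * G i))\<^sup>2"
    using assms by (intro arg_cong[where f="\<lambda>x. x\<^sup>2"] sum.cong) (auto simp: mult.assoc[symmetric])
  also have "\<dots> \<le> (\<Sum>i\<in>I. (sqrt (a i))\<^sup>2) * (\<Sum>i\<in>I. (sqrt (a i) * G i)\<^sup>2)"
    by (rule Cauchy_Schwarz_ineq_sum)
  also have "\<dots> = (\<Sum>i\<in>I. a i) * (\<Sum>i\<in>I. a i * (G i)\<^sup>2)"
    using assms by (intro arg_cong2[where f="(*)"] sum.cong) (auto simp: power_mult_distrib)
  finally show ?thesis .
qed

lemma geo_le:
  fixes q :: real
  assumes "0 \<le> q" "q < 1"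
  shows "(\<Sum>s\<le>t. q ^ (t - s)) \<le> 1 / (1 - q)"
proof (induction t)
  case 0 then show ?case using assms by (simp add: field_simps)
next
  case (Suc t)
  have "(\<Sum>s\<le>Suc t. q ^ (Suc t - s)) = q * (\<Sum>s\<le>t. q ^ (t - s)) + 1"
    by (simp add: sum_distrib_left Suc_diff_le power_Suc[symmetric] del: power_Suc)
  also have "\<dots> \<le> q * (1 / (1 - q)) + 1"
    using Suc assms by (intro add_right_mono mult_left_mono) auto
  also have "\<dots> = 1 / (1 - q)" using assms by (simp add: field_simps)
  finally show ?case .
qed

lemma geo_le2:
  fixes q :: real
  assumes "0 \<le> q" "q < 1"
  shows "(\<Sum>t\<in>{s..<T}. q ^ (t - s)) \<le> 1 / (1 - q)"
proof (cases "s \<le> T")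
  case True
  have "(\<Sum>t\<in>{s..<T}. q ^ (t - s)) = (\<Sum>k<T - s. q ^ k)"
  proof -
    have "(\<Sum>t\<in>{s..<T}. q ^ (t - s)) = (\<Sum>k\<in>{0..<T - s}. q ^ k)"
      using True by (intro sum.reindex_bij_witness[where i="\<lambda>k. k + s" and j="\<lambda>t. t - s"]) auto
    then show ?thesis by (simp add: atLeast0LessThan)
  qed
  also have "\<dots> \<le> (\<Sum>k\<le>T - s. q ^ ((T - s) - k))"
  proof -
    have "(\<Sum>k\<le>T - s. q ^ ((T - s) - k)) = (\<Sum>k\<le>T - s. q ^ k)"
      by (rule sum.reindex_bij_witness[where i="\<lambda>k. (T - s) - k" and j="\<lambda>k. (T - s) - k"]) auto
    moreover have "(\<Sum>k<T - s. q ^ k) \<le> (\<Sum>k\<le>T - s. q ^ k)"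
      using assms by (intro sum_mono2) auto
    ultimately show ?thesis by simp
  qed
  also have "\<dots> \<le> 1 / (1 - q)" by (rule geo_le[OF assms])
  finally show ?thesis .
next
  case False then show ?thesis using assms by simp
qed

lemma tri_swap:
  fixes f :: "nat \<Rightarrow> nat \<Rightarrow> real" and T :: nat
  shows "(\<Sum>t<T. \<Sum>s\<le>t. f t s) = (\<Sum>s<T. \<Sum>t\<in>{s..<T}. f t s)"
proof (induction T)
  case 0 then show ?case by simp
next
  case (Suc T)
  have "(\<Sum>s<Suc T. \<Sum>t\<in>{s..<Suc T}. f t s) = (\<Sum>s<T. \<Sum>t\<in>{s..<Suc T}. f t s) + f T T"
    by simp
  also have "(\<Sum>s<T. \<Sum>t\<in>{s..<Suc T}. f t s) = (\<Sum>s<T. (\<Sum>t\<in>{s..<T}. f t s) + f T s)"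
    by (intro sum.cong) auto
  finally show ?case using Suc by (simp add: sum.distrib lessThan_Suc_atMost[symmetric])
qed

lemma exch:
  fixes q :: real and Y :: "nat \<Rightarrow> real"
  assumes "0 \<le> q" "q < 1" "\<And>s. Y s \<ge> 0"
  shows "(\<Sum>t<T. \<Sum>s\<le>t. q ^ (t - s) * Y s) \<le> 1 / (1 - q) * (\<Sum>s<T. Y s)"
proof -
  have "(\<Sum>t<T. \<Sum>s\<le>t. q ^ (t - s) * Y s) = (\<Sum>s<T. (\<Sum>t\<in>{s..<T}. q ^ (t - s)) * Y s)"
    by (simp add: tri_swap sum_distrib_right)
  also have "\<dots> \<le> (\<Sum>s<T. 1 / (1 - q) * Y s)"
    using assms geo_le2 by (intro sum_mono mult_right_mono) auto
  finally show ?thesis by (simp add: sum_distrib_left)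
qed

lemma sq2: "(a + b)\<^sup>2 \<le> 3 * a\<^sup>2 + 3 / 2 * (b::real)\<^sup>2"
proof -
  have "0 \<le> 2 * (a - b / 2)\<^sup>2" by simp
  then show ?thesis by (simp add: power2_eq_square algebra_simps)
qed

lemma sq4: "(a + b + c + d)\<^sup>2 \<le> 2 * a\<^sup>2 + 6 * b\<^sup>2 + 6 * c\<^sup>2 + 6 * (d::real)\<^sup>2"
proof -
  have "0 \<le> (a - (b + c + d))\<^sup>2 + 2 * ((b - c)\<^sup>2 + (c - d)\<^sup>2 + (b - d)\<^sup>2)" by simp
  then show ?thesis by (simp add: power2_eq_square algebra_simps)
qed

lemma geo2:
  fixes q :: real
  assumes "0 \<le> q" "q < 1"
  shows "(\<Sum>t<T. q ^ (2 * t)) \<le> 1 / (1 - q)\<^sup>2"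
proof -
  have "(\<Sum>t<T. q ^ (2 * t)) \<le> (\<Sum>t<T. q ^ t)"
    using assms by (intro sum_mono power_decreasing) auto
  also have "\<dots> = (1 - q ^ T) / (1 - q)" using assms by (simp add: sum_gp_strict)
  also have "\<dots> \<le> 1 / (1 - q)" using assms by (intro divide_right_mono) auto
  also have "\<dots> \<le> 1 / (1 - q)\<^sup>2"
    using assms by (intro divide_left_mono) (auto simp: power2_eq_square mult_le_cancel_left1)
  finally show ?thesis .
qed

lemma final_arith:
  fixes Lq Xg :: ennreal and a b c k l nn P :: real
  assumes fin: "Lq < \<infinity>" and pos: "0 \<le> a" "0 \<le> b" "0 \<le> c" "0 \<le> k" "0 \<le> l" "0 < nn" "0 < P"
    and Pd: "P = 1 - l * nn"
    and h: "ennreal (1 / nn) * Lq \<le> ennreal a + ennreal b + ennreal l * Lq + ennreal c + ennreal k * Xg"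
  shows "ennreal (1 / nn) * Lq \<le> ennreal (a / P) + ennreal (b / P) + ennreal (c / P) + ennreal (k / P) * Xg"
proof (cases "Xg = \<infinity> \<and> k > 0")
  case True
  then have "ennreal (k / P) * Xg = \<infinity>" using pos by (simp add: ennreal_mult_top)
  then show ?thesis by simp
next
  case False
  obtain lq where lq: "Lq = ennreal lq" "0 \<le> lq" using fin by (cases Lq) auto
  define xg where "xg = (if k = 0 then 0 else enn2real Xg)"
  have xg0: "0 \<le> xg" by (simp add: xg_def)
  have kX: "ennreal k * Xg = ennreal (k * xg)" and kX': "ennreal (k / P) * Xg = ennreal (k / P * xg)"
  proof -
    have "ennreal k * Xg = ennreal (k * xg) \<and> ennreal (k / P) * Xg = ennreal (k / P * xg)"
    proof (cases "k = 0")
      case True then show ?thesis by (simp add: xg_def)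
    next
      case k: False
      then have "Xg < \<infinity>" using False pos by (auto simp: less_top)
      then obtain r where r: "Xg = ennreal r" "0 \<le> r" by (cases Xg) auto
      have e1: "ennreal (k / P * r) = ennreal (k / P) * ennreal r" using k pos r by (subst ennreal_mult) auto
      have e2: "ennreal (k * r) = ennreal k * ennreal r" using k pos r by (subst ennreal_mult) auto
      have "xg = r" using k r by (simp add: xg_def)
      then show ?thesis using e1 e2 r by simp
    qed
    then show "ennreal k * Xg = ennreal (k * xg)" "ennreal (k / P) * Xg = ennreal (k / P * xg)" by auto
  qed
  have "ennreal (lq / nn) \<le> ennreal (a + b + l * lq + c + k * xg)"
    using h unfolding lq kX using pos lq xg0
    by (simp add: ennreal_mult[symmetric] ennreal_plus[symmetric] del: ennreal_plus)
  then have r1: "lq / nn \<le> a + b + l * lq + c + k * xg"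
    using pos lq xg0 by (subst (asm) ennreal_le_iff) auto
  have "P * (lq / nn) = lq / nn - l * lq" using pos unfolding Pd by (simp add: field_simps)
  then have "P * (lq / nn) \<le> a + b + c + k * xg" using r1 by linarith
  then have r2: "lq / nn \<le> (a + b + c + k * xg) / P" using pos by (simp add: field_simps)
  have "ennreal (1 / nn) * Lq = ennreal (lq / nn)" using lq pos by (simp add: ennreal_mult[symmetric])
  also have "\<dots> \<le> ennreal ((a + b + c + k * xg) / P)" using r2 by (rule ennreal_leI)
  also have "\<dots> = ennreal (a / P) + ennreal (b / P) + ennreal (c / P) + ennreal (k / P * xg)"
    using pos xg0 by (simp add: add_divide_distrib ennreal_plus[symmetric] del: ennreal_plus)
  finally show ?thesis unfolding kX' .
qed

theorem lemmaA5:
  fixes n :: nat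
    and E :: "(nat \<times> nat) set"
    and W :: "nat \<Rightarrow> nat \<Rightarrow> nat \<Rightarrow> real"
    and M :: "'a measure"
    and S :: "'b measure"
    and \<xi> :: "nat \<Rightarrow> nat \<Rightarrow> 'a \<Rightarrow> 'b"
    and g :: "nat \<Rightarrow> 'd::euclidean_space \<Rightarrow> 'b \<Rightarrow> 'd"
    and f :: "nat \<Rightarrow> 'd \<Rightarrow> real"
    and Df :: "nat \<Rightarrow> 'd \<Rightarrow> 'd"
    and x0 :: "nat \<Rightarrow> 'd"
    and x :: "nat \<Rightarrow> nat \<Rightarrow> 'a \<Rightarrow> 'd"
    and w :: "nat \<Rightarrow> nat \<Rightarrow> real"
    and \<eta> L \<sigma> \<zeta> \<delta> C q P :: real
    and B \<Delta> T :: nat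
  assumes n2: "n \<ge> 2"
    \<comment> \<open>base topology: bidirected, with self-loops\<close>
    and E_sub: "E \<subseteq> {..<n} \<times> {..<n}"
    and E_bidir: "\<And>i j. (j, i) \<in> E \<Longrightarrow> (i, j) \<in> E"
    and E_loops: "\<And>i. i < n \<Longrightarrow> (i, i) \<in> E"
    \<comment> \<open>nonnegative column-stochastic mixing matrices supported on E\<close>
    and W_nonneg: "\<And>t i j. W t i j \<ge> 0"
    and W_colstoch: "\<And>t j. j < n \<Longrightarrow> (\<Sum>i<n. W t i j) = 1"
    and W_supp: "\<And>t i j. W t i j \<noteq> 0 \<Longrightarrow> (j, i) \<in> E"
    \<comment> \<open>delta = min over t of the smallest positive entry of W^(t)\<close>
    and \<delta>_def: "\<delta> = Inf {W t i j |t i j. i < n \<and> j < n \<and> W t i j > 0}"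
    and \<delta>_pos: "\<delta> > 0"
    \<comment> \<open>Assumption (4)\<close>
    and B_pos: "B > 0" and \<Delta>_pos: "\<Delta> > 0"
    and conn: "\<And>l. strongly_connected_diam_le {..<n}
                 (\<Union>t\<in>{l * B..<(l + 1) * B}. active_edges E W t) \<Delta>"
    and C_def: "C = 4 / \<delta> ^ (\<Delta> * B)"
    and q_def: "q = root (\<Delta> * B) (1 - \<delta> ^ (\<Delta> * B))"
    \<comment> \<open>Assumption (1): L-smoothness of each f_i, with gradient Df i\<close>
    and f_grad: "\<And>i z. i < n \<Longrightarrow> (f i has_derivative (\<lambda>h. Df i z \<bullet> h)) (at z)"
    and f_smooth: "\<And>i y z. i < n \<Longrightarrow> norm (Df i y - Df i z) \<le> L * norm (y - z)"
    \<comment> \<open>stochastic gradients with fresh independent minibatches\<close>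
    and prob: "prob_space M"
    and \<xi>_meas: "\<And>j t. \<xi> j t \<in> M \<rightarrow>\<^sub>M S"
    and \<xi>_indep: "prob_space.indep_vars M (\<lambda>_. S) (\<lambda>(j, t). \<xi> j t) ({..<n} \<times> UNIV)"
    and g_meas: "\<And>j. j < n \<Longrightarrow> (\<lambda>(y, b). g j y b) \<in> borel \<Otimes>\<^sub>M S \<rightarrow>\<^sub>M borel"
    \<comment> \<open>Assumption (2): bounded variance\<close>
    and var: "\<And>j t y. j < n \<Longrightarrow>
       (\<integral>\<^sup>+ \<omega>. ennreal ((norm (g j y (\<xi> j t \<omega>) - Df j y))\<^sup>2) \<partial>M) \<le> ennreal (\<sigma>\<^sup>2)"
    \<comment> \<open>Assumption (3): bounded heterogeneity, with grad f = (1/n) sum_i grad f_i\<close>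
    and het: "\<And>y. (1 / real n) * (\<Sum>i<n. (norm (Df i y - (1 / real n) *\<^sub>R (\<Sum>k<n. Df k y)))\<^sup>2)
               \<le> \<zeta>\<^sup>2"
    \<comment> \<open>SGP iterates (x^(0) deterministic)\<close>
    and x_init: "\<And>i \<omega>. \<omega> \<in> space M \<Longrightarrow> x 0 i \<omega> = x0 i"
    and x_step: "\<And>t i \<omega>. \<omega> \<in> space M \<Longrightarrow> x (Suc t) i \<omega> =
       (\<Sum>j<n. W t i j *\<^sub>R (x t j \<omega> - \<eta> *\<^sub>R g j ((1 / w t j) *\<^sub>R x t j \<omega>) (\<xi> j t \<omega>)))"
    and w_init: "\<And>i. w 0 i = 1"
    and w_step: "\<And>t i. w (Suc t) i = (\<Sum>j<n. W t i j * w t j)"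
    \<comment> \<open>almost-sure consensus error bound\<close>
    and as_bound: "AE \<omega> in M. \<forall>t. \<forall>i<n.
       norm ((1 / real n) *\<^sub>R (\<Sum>m<n. x t m \<omega>) - (1 / w t i) *\<^sub>R x t i \<omega>)
       \<le> C * q ^ t * Max ((\<lambda>m. norm (x0 m)) ` {..<n})
         + \<eta> * C * (\<Sum>s\<le>t. q ^ (t - s) *
             Max ((\<lambda>j. norm (g j ((1 / w s j) *\<^sub>R x s j \<omega>) (\<xi> j s \<omega>))) ` {..<n}))"
    and P_def: "P = 1 - 9 * \<eta>\<^sup>2 * C\<^sup>2 * L\<^sup>2 * real n / (1 - q)\<^sup>2"
    and P_pos: "P > 0"
    and T1: "T \<ge> 1"
  shows "(\<Sum>t<T. ennreal (1 / real n) * (\<Sum>i<n. \<integral>\<^sup>+ \<omega>.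
            ennreal ((norm ((1 / real n) *\<^sub>R (\<Sum>m<n. x t m \<omega>) - (1 / w t i) *\<^sub>R x t i \<omega>))\<^sup>2) \<partial>M))
    \<le> ennreal (3 * C\<^sup>2 / (P * (1 - q)\<^sup>2) * (Max ((\<lambda>m. norm (x0 m)) ` {..<n}))\<^sup>2)
      + ennreal (3 * \<eta>\<^sup>2 * C\<^sup>2 * real n * \<sigma>\<^sup>2 / (P * (1 - q)\<^sup>2) * real T)
      + ennreal (9 * \<eta>\<^sup>2 * C\<^sup>2 * real n * \<zeta>\<^sup>2 / (P * (1 - q)\<^sup>2) * real T)
      + ennreal (9 * \<eta>\<^sup>2 * C\<^sup>2 / (P * (1 - q)\<^sup>2)) *
        (\<Sum>t<T. \<integral>\<^sup>+ \<omega>. ennreal ((norm ((1 / real n) *\<^sub>R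
            (\<Sum>k<n. Df k ((1 / real n) *\<^sub>R (\<Sum>m<n. x t m \<omega>)))))\<^sup>2) \<partial>M)"
proof -
  interpret prob_space M by (rule prob)
  have n0: "0 < n" using n2 by simp
  have nR: "real n > 0" using n0 by simp
  have \<delta>_le1: "\<delta> \<le> 1"
  proof -
    have s1: "(\<Sum>i<n. W 0 i 0) = 1" using W_colstoch n0 by simp
    have "\<exists>i<n. W 0 i 0 > 0"
    proof (rule ccontr)
      assume na: "\<not> (\<exists>i<n. W 0 i 0 > 0)"
      have "W 0 i 0 = 0" if "i < n" for i
      proof -
        have "\<not> 0 < W 0 i 0" using na that by blast
        then show ?thesis using W_nonneg[of 0 i 0] by linarith
      qed
      then have "(\<Sum>i<n. W 0 i 0) = 0" by simp
      then show False using s1 by simp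
    qed
    then obtain i where i: "i < n" "W 0 i 0 > 0" by blast
    have "W 0 i 0 \<le> (\<Sum>i<n. W 0 i 0)"
      using i W_nonneg by (intro member_le_sum) auto
    then have le1: "W 0 i 0 \<le> 1" using s1 by simp
    have "\<delta> \<le> W 0 i 0" unfolding \<delta>_def
    proof (rule cInf_lower)
      show "W 0 i 0 \<in> {W t i j |t i j. i < n \<and> j < n \<and> W t i j > 0}" using i n0 by blast
      show "bdd_below {W t i j |t i j. i < n \<and> j < n \<and> W t i j > 0}"
        by (rule bdd_belowI[where m=0]) (auto simp: W_nonneg)
    qed
    then show ?thesis using le1 by simp
  qed
  have kpos: "0 < \<Delta> * B" using B_pos \<Delta>_pos by simp
  have dk: "0 < \<delta> ^ (\<Delta> * B)" "\<delta> ^ (\<Delta> * B) \<le> 1"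
    using \<delta>_pos \<delta>_le1 by (auto intro: power_le_one)
  have q0: "0 \<le> q" unfolding q_def using dk by (intro real_root_ge_zero) simp
  have q1: "q < 1" unfolding q_def using dk kpos by simp
  define XX :: "nat \<times> nat \<Rightarrow> 'a \<Rightarrow> 'b" where "XX = (\<lambda>(j, t). \<xi> j t)"
  have XX_simp[simp]: "\<And>j t. XX (j, t) = \<xi> j t" by (simp add: XX_def)
  define X0 where "X0 = Max ((\<lambda>m. norm (x0 m)) ` {..<n})"
  define xb where "xb = (\<lambda>t \<omega>. (1 / real n) *\<^sub>R (\<Sum>m<n. x t m \<omega>))"
  define z where "z = (\<lambda>t j \<omega>. (1 / w t j) *\<^sub>R x t j \<omega>)"
  define gg where "gg = (\<lambda>s j \<omega>. g j (z s j \<omega>) (\<xi> j s \<omega>))"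
  define e where "e = (\<lambda>t i \<omega>. norm (xb t \<omega> - z t i \<omega>))"
  define G where "G = (\<lambda>s \<omega>. Max ((\<lambda>j. norm (gg s j \<omega>)) ` {..<n}))"
  define Nn where "Nn = (\<lambda>s \<omega>. (\<Sum>j<n. (norm (gg s j \<omega> - Df j (z s j \<omega>)))\<^sup>2))"
  define gf where "gf = (\<lambda>y. (1 / real n) *\<^sub>R (\<Sum>k<n. Df k y))"
  define R where "R = (\<lambda>s \<omega>. (norm (gf (xb s \<omega>)))\<^sup>2)"
  define K where "K = \<eta>\<^sup>2 * C\<^sup>2 / (1 - q)\<^sup>2"
  define Fx' where "Fx' = Fx n W x0 \<eta> g w"
  have x_eq: "x t i \<omega> = Fx' t i (\<lambda>p. XX p \<omega>)" if "\<omega> \<in> space M" for t i \<omega>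
  proof (induction t arbitrary: i)
    case 0 then show ?case using x_init[OF that] by (simp add: Fx'_def)
  next
    case (Suc t) then show ?case using x_step[OF that] by (simp add: Fx'_def)
  qed
  have x_eq2: "x t i \<omega> = Fx' t i (restrict (\<lambda>p. XX p \<omega>) ({..<n} \<times> {..<t}))" if "\<omega> \<in> space M" for t i \<omega>
    unfolding x_eq[OF that] Fx'_def by (rule Fx_cong) auto
  have XXm: "XX p \<in> M \<rightarrow>\<^sub>M S" for p using \<xi>_meas by (cases p) simp
  have restr_m: "(\<lambda>\<omega>. restrict (\<lambda>p. XX p \<omega>) A) \<in> M \<rightarrow>\<^sub>M PiM A (\<lambda>_. S)" for A
    using XXm by (intro measurable_restrict) auto
  have x_meas[measurable]: "x t i \<in> borel_measurable M" for t i
  proof -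
    have "(\<lambda>\<omega>. Fx' t i (restrict (\<lambda>p. XX p \<omega>) ({..<n} \<times> {..<t}))) \<in> borel_measurable M"
      by (rule measurable_compose[OF restr_m]) (unfold Fx'_def, rule Fx_meas[OF g_meas], auto)
    then show ?thesis
      by (subst measurable_cong[where g="\<lambda>\<omega>. Fx' t i (restrict (\<lambda>p. XX p \<omega>) ({..<n} \<times> {..<t}))"]) (auto simp: x_eq2)
  qed
  have Df_cont: "continuous_on UNIV (Df j)" if j: "j < n" for j
  proof (rule lipschitz_on_continuous_on)
    show "\<bar>L\<bar>-lipschitz_on UNIV (Df j)"
    proof (rule lipschitz_onI)
      fix y y' :: 'd
      have "norm (Df j y - Df j y') \<le> L * norm (y - y')" using f_smooth[OF j] .
      also have "\<dots> \<le> \<bar>L\<bar> * norm (y - y')" by (intro mult_right_mono) auto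
      finally show "dist (Df j y) (Df j y') \<le> \<bar>L\<bar> * dist y y'" by (simp add: dist_norm)
    qed simp
  qed
  have Df_meas: "Df j \<in> borel_measurable borel" if "j < n" for j
    using Df_cont[OF that] by (rule borel_measurable_continuous_onI)
  have z_meas[measurable]: "z t j \<in> borel_measurable M" for t j unfolding z_def by measurable
  have xb_meas[measurable]: "xb t \<in> borel_measurable M" for t unfolding xb_def by measurable
  have gg_meas: "gg s j \<in> borel_measurable M" if j: "j < n" for s j
  proof -
    have "(\<lambda>\<omega>. (z s j \<omega>, \<xi> j s \<omega>)) \<in> M \<rightarrow>\<^sub>M borel \<Otimes>\<^sub>M S"
      using \<xi>_meas by (intro measurable_Pair) auto
    from measurable_compose[OF this g_meas[OF j]] show ?thesis by (simp add: gg_def)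
  qed
  have Dfz_meas: "(\<lambda>\<omega>. Df j (f' \<omega>)) \<in> borel_measurable M" if "j < n" "f' \<in> borel_measurable M" for j and f' :: "'a \<Rightarrow> 'd"
    using measurable_compose[OF that(2) Df_meas[OF that(1)]] by (simp add: o_def)
  have noise: "(\<integral>\<^sup>+ \<omega>. ennreal ((norm (gg s j \<omega> - Df j (z s j \<omega>)))\<^sup>2) \<partial>M) \<le> ennreal (\<sigma>\<^sup>2)"
    if j: "j < n" for s j
  proof -
    define H where "H = (\<lambda>y b. ennreal ((norm (g j y b - Df j y))\<^sup>2))"
    define \<phi> where "\<phi> = (\<lambda>v. (1 / w s j) *\<^sub>R Fx' s j v)"
    have gm: "(\<lambda>p. g j (fst p) (snd p)) \<in> borel_measurable (borel \<Otimes>\<^sub>M S)"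
      using g_meas[OF j] by (simp add: case_prod_beta)
    have dm: "(\<lambda>p. Df j (fst p)) \<in> borel_measurable (borel \<Otimes>\<^sub>M S)"
      using measurable_compose[OF measurable_fst[of borel S] Df_meas[OF j]] by (simp add: o_def)
    have "(\<lambda>p. ennreal ((norm (g j (fst p) (snd p) - Df j (fst p)))\<^sup>2)) \<in> borel_measurable (borel \<Otimes>\<^sub>M S)"
      using gm dm by measurable
    then have Hm: "case_prod H \<in> borel_measurable (borel \<Otimes>\<^sub>M S)"
      by (simp add: H_def case_prod_beta)
    have \<phi>m: "\<phi> \<in> borel_measurable (PiM ({..<n} \<times> {..<s}) (\<lambda>_. S))"
      unfolding \<phi>_def Fx'_def by (intro borel_measurable_scaleR borel_measurable_const Fx_meas[OF g_meas]) auto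
    have ind: "indep_vars (\<lambda>_. S) XX ({..<n} \<times> UNIV)"
      using \<xi>_indep by (simp add: XX_def)
    have "(\<integral>\<^sup>+ \<omega>. H (\<phi> (restrict (\<lambda>i. XX i \<omega>) ({..<n} \<times> {..<s}))) (XX (j, s) \<omega>) \<partial>M) \<le> ennreal (\<sigma>\<^sup>2)"
      by (rule indep_bound[OF prob ind _ _ _ \<phi>m Hm]) (use j var in \<open>auto simp: H_def\<close>)
    moreover have "(\<integral>\<^sup>+ \<omega>. H (\<phi> (restrict (\<lambda>i. XX i \<omega>) ({..<n} \<times> {..<s}))) (XX (j, s) \<omega>) \<partial>M)
        = (\<integral>\<^sup>+ \<omega>. ennreal ((norm (gg s j \<omega> - Df j (z s j \<omega>)))\<^sup>2) \<partial>M)"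
      by (intro nn_integral_cong) (simp add: H_def \<phi>_def gg_def z_def x_eq2[symmetric])
    ultimately show ?thesis by simp
  qed
  have gg_sqf: "sqf M (gg s j)" if j: "j < n" and xs: "\<And>i. i < n \<Longrightarrow> sqf M (x s i)" for s j
  proof -
    have zs: "sqf M (z s j)" unfolding z_def by (rule sqf_scale[OF xs[OF j]])
    have s1: "sqf M (\<lambda>\<omega>. gg s j \<omega> - Df j (z s j \<omega>))"
      by (rule sqf_bound[OF _ noise[OF j]]) (intro borel_measurable_diff gg_meas[OF j] Dfz_meas[OF j]; simp)
    have s2: "sqf M (\<lambda>\<omega>. Df j (z s j \<omega>) - Df j 0)"
    proof (rule sqf_dom[OF zs, where c="\<bar>L\<bar>"])
      show "(\<lambda>\<omega>. Df j (z s j \<omega>) - Df j 0) \<in> borel_measurable M"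
        by (intro borel_measurable_diff Dfz_meas[OF j]) auto
      fix \<omega>
      have "norm (Df j (z s j \<omega>) - Df j 0) \<le> L * norm (z s j \<omega> - 0)" by (rule f_smooth[OF j])
      also have "\<dots> \<le> \<bar>L\<bar> * norm (z s j \<omega>)" by (simp add: mult_right_mono)
      finally show "norm (Df j (z s j \<omega>) - Df j 0) \<le> \<bar>L\<bar> * norm (z s j \<omega>)" .
    qed
    have "sqf M (\<lambda>\<omega>. (gg s j \<omega> - Df j (z s j \<omega>)) + (Df j (z s j \<omega>) - Df j 0) + Df j 0)"
      by (intro sqf_add s1 s2 sqf_const prob)
    then show ?thesis by (rule sqf_cong) simp
  qed
  have x_sqf_all: "\<forall>i<n. sqf M (x t i)" for t
  proof (induction t)
    case 0
    show ?case
    proof (intro allI impI)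
      fix i assume "i < n"
      show "sqf M (x 0 i)" by (rule sqf_cong[OF sqf_const[OF prob, of "x0 i"]]) (simp add: x_init)
    qed
  next
    case (Suc t)
    show ?case
    proof (intro allI impI)
      fix i assume i: "i < n"
      have "sqf M (\<lambda>\<omega>. \<Sum>j<n. W t i j *\<^sub>R (x t j \<omega> - \<eta> *\<^sub>R gg t j \<omega>))"
        using Suc.IH gg_sqf by (intro sqf_sum[OF prob] sqf_scale sqf_diff) auto
      then show "sqf M (x (Suc t) i)" by (rule sqf_cong) (simp add: x_step gg_def z_def)
    qed
  qed
  have x_sqf: "sqf M (x t i)" if "i < n" for t i using x_sqf_all that by blast
  have e_fin: "(\<integral>\<^sup>+ \<omega>. ennreal ((e t i \<omega>)\<^sup>2) \<partial>M) < \<infinity>" if i: "i < n" for t i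
  proof -
    have "sqf M (\<lambda>\<omega>. xb t \<omega> - z t i \<omega>)"
      unfolding xb_def z_def using x_sqf i by (intro sqf_diff sqf_scale sqf_sum[OF prob]) auto
    then show ?thesis by (simp add: sqf_def e_def)
  qed
  have e_meas: "e t i \<in> borel_measurable M" for t i unfolding e_def by measurable
  have Nn_meas: "Nn s \<in> borel_measurable M" for s
    unfolding Nn_def
  proof (rule borel_measurable_sum)
    fix j assume "j \<in> {..<n}" then have j: "j < n" by simp
    note [measurable] = gg_meas[OF j] Df_meas[OF j]
    show "(\<lambda>\<omega>. (norm (gg s j \<omega> - Df j (z s j \<omega>)))\<^sup>2) \<in> borel_measurable M" by measurable
  qed
  have gf_meas[measurable]: "gf \<in> borel_measurable borel"
    unfolding gf_def by (intro borel_measurable_scaleR borel_measurable_const borel_measurable_sum Df_meas) auto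
  have R_meas: "R s \<in> borel_measurable M" for s
    unfolding R_def by measurable
  have K0: "0 \<le> K" unfolding K_def by simp
  define a0 where "a0 = 3 * C\<^sup>2 * X0\<^sup>2 / (1 - q)\<^sup>2"
  have a00: "0 \<le> a0" unfolding a0_def by simp
  define Q where "Q = (\<lambda>\<omega>. \<Sum>t<T. \<Sum>i<n. (e t i \<omega>)\<^sup>2)"
  define SN where "SN = (\<lambda>\<omega>. \<Sum>s<T. Nn s \<omega>)"
  define SR where "SR = (\<lambda>\<omega>. \<Sum>s<T. R s \<omega>)"
  have Nn0: "0 \<le> Nn s \<omega>" for s \<omega> unfolding Nn_def by (intro sum_nonneg) auto
  have R0: "0 \<le> R s \<omega>" for s \<omega> unfolding R_def by simp
  have Q0: "0 \<le> Q \<omega>" for \<omega> unfolding Q_def by (intro sum_nonneg) auto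
  have SN0: "0 \<le> SN \<omega>" for \<omega> unfolding SN_def using Nn0 by (intro sum_nonneg) auto
  have SR0: "0 \<le> SR \<omega>" for \<omega> unfolding SR_def using R0 by (intro sum_nonneg) auto
  have Gb: "(G s \<omega>)\<^sup>2 \<le> 2 * Nn s \<omega> + 6 * L\<^sup>2 * (\<Sum>j<n. (e s j \<omega>)\<^sup>2) + 6 * (real n * \<zeta>\<^sup>2) + 6 * R s \<omega>" for s \<omega>
  proof -
    have fin: "finite ((\<lambda>j. norm (gg s j \<omega>)) ` {..<n})" by simp
    have ne: "(\<lambda>j. norm (gg s j \<omega>)) ` {..<n} \<noteq> {}" using n0 by auto
    obtain j where j: "j < n" and Gj: "G s \<omega> = norm (gg s j \<omega>)"
      using Max_in[OF fin ne] unfolding G_def by auto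
    define u1 where "u1 = gg s j \<omega> - Df j (z s j \<omega>)"
    define u2 where "u2 = Df j (z s j \<omega>) - Df j (xb s \<omega>)"
    define u3 where "u3 = Df j (xb s \<omega>) - gf (xb s \<omega>)"
    define u4 where "u4 = gf (xb s \<omega>)"
    have "gg s j \<omega> = u1 + u2 + u3 + u4" by (simp add: u1_def u2_def u3_def u4_def)
    moreover have "norm (u1 + u2 + u3 + u4) \<le> norm (u1 + u2 + u3) + norm u4"
      "norm (u1 + u2 + u3) \<le> norm (u1 + u2) + norm u3" "norm (u1 + u2) \<le> norm u1 + norm u2"
      by (rule norm_triangle_ineq)+
    ultimately have tri: "G s \<omega> \<le> norm u1 + norm u2 + norm u3 + norm u4" using Gj by (simp only:)
    have "(G s \<omega>)\<^sup>2 \<le> (norm u1 + norm u2 + norm u3 + norm u4)\<^sup>2"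
      using tri Gj by (intro power_mono) auto
    also have "\<dots> \<le> 2 * (norm u1)\<^sup>2 + 6 * (norm u2)\<^sup>2 + 6 * (norm u3)\<^sup>2 + 6 * (norm u4)\<^sup>2"
      by (rule sq4)
    also have "\<dots> \<le> 2 * Nn s \<omega> + 6 * L\<^sup>2 * (\<Sum>j<n. (e s j \<omega>)\<^sup>2) + 6 * (real n * \<zeta>\<^sup>2) + 6 * R s \<omega>"
    proof -
      have h1: "(norm u1)\<^sup>2 \<le> Nn s \<omega>" unfolding Nn_def u1_def
        using j by (intro member_le_sum[where f="\<lambda>j. (norm (gg s j \<omega> - Df j (z s j \<omega>)))\<^sup>2"]) auto
      have "norm u2 \<le> L * norm (z s j \<omega> - xb s \<omega>)" unfolding u2_def by (rule f_smooth[OF j])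
      then have "(norm u2)\<^sup>2 \<le> (L * norm (z s j \<omega> - xb s \<omega>))\<^sup>2" by (intro power_mono) auto
      also have "\<dots> = L\<^sup>2 * (e s j \<omega>)\<^sup>2" by (simp add: e_def power_mult_distrib norm_minus_commute)
      also have "\<dots> \<le> L\<^sup>2 * (\<Sum>j<n. (e s j \<omega>)\<^sup>2)"
        using j by (intro mult_left_mono member_le_sum[where f="\<lambda>j. (e s j \<omega>)\<^sup>2"]) auto
      finally have h2: "(norm u2)\<^sup>2 \<le> L\<^sup>2 * (\<Sum>j<n. (e s j \<omega>)\<^sup>2)" .
      have "(norm u3)\<^sup>2 \<le> (\<Sum>i<n. (norm (Df i (xb s \<omega>) - gf (xb s \<omega>)))\<^sup>2)" unfolding u3_def
        using j by (intro member_le_sum[where f="\<lambda>i. (norm (Df i (xb s \<omega>) - gf (xb s \<omega>)))\<^sup>2"]) auto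
      also have "\<dots> \<le> real n * \<zeta>\<^sup>2"
      proof -
        have "(1 / real n) * (\<Sum>i<n. (norm (Df i (xb s \<omega>) - gf (xb s \<omega>)))\<^sup>2) \<le> \<zeta>\<^sup>2"
          using het[of "xb s \<omega>"] by (simp add: gf_def)
        then show ?thesis using nR by (simp add: field_simps)
      qed
      finally have h3: "(norm u3)\<^sup>2 \<le> real n * \<zeta>\<^sup>2" .
      have h4: "(norm u4)\<^sup>2 = R s \<omega>" by (simp add: u4_def R_def)
      show ?thesis using h1 h2 h3 h4 by linarith
    qed
    finally show ?thesis .
  qed
  have eb: "(e t i \<omega>)\<^sup>2 \<le> 3 * C\<^sup>2 * q ^ (2 * t) * X0\<^sup>2 + 3 / 2 * \<eta>\<^sup>2 * C\<^sup>2 * (1 / (1 - q)) * (\<Sum>s\<le>t. q ^ (t - s) * (G s \<omega>)\<^sup>2)"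
    if AB: "e t i \<omega> \<le> C * q ^ t * X0 + \<eta> * C * (\<Sum>s\<le>t. q ^ (t - s) * G s \<omega>)" for t i \<omega>
  proof -
    define A where "A = C * q ^ t * X0"
    define Sg where "Sg = (\<Sum>s\<le>t. q ^ (t - s) * G s \<omega>)"
    have "(e t i \<omega>)\<^sup>2 \<le> (A + \<eta> * C * Sg)\<^sup>2"
      using AB unfolding A_def Sg_def by (intro power_mono) (auto simp: e_def)
    also have "\<dots> \<le> 3 * A\<^sup>2 + 3 / 2 * (\<eta> * C * Sg)\<^sup>2" by (rule sq2)
    also have "\<dots> \<le> 3 * A\<^sup>2 + 3 / 2 * (\<eta>\<^sup>2 * C\<^sup>2 * (1 / (1 - q) * (\<Sum>s\<le>t. q ^ (t - s) * (G s \<omega>)\<^sup>2)))"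
    proof -
      have "Sg\<^sup>2 \<le> (\<Sum>s\<le>t. q ^ (t - s)) * (\<Sum>s\<le>t. q ^ (t - s) * (G s \<omega>)\<^sup>2)"
        unfolding Sg_def using q0 by (intro wcs) auto
      also have "\<dots> \<le> 1 / (1 - q) * (\<Sum>s\<le>t. q ^ (t - s) * (G s \<omega>)\<^sup>2)"
        using q0 q1 by (intro mult_right_mono geo_le sum_nonneg) auto
      finally have "Sg\<^sup>2 \<le> 1 / (1 - q) * (\<Sum>s\<le>t. q ^ (t - s) * (G s \<omega>)\<^sup>2)" .
      then have "(\<eta> * C * Sg)\<^sup>2 \<le> \<eta>\<^sup>2 * C\<^sup>2 * (1 / (1 - q) * (\<Sum>s\<le>t. q ^ (t - s) * (G s \<omega>)\<^sup>2))"
        unfolding power_mult_distrib by (rule mult_left_mono) auto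
      then show ?thesis by linarith
    qed
    also have "\<dots> = 3 * C\<^sup>2 * q ^ (2 * t) * X0\<^sup>2 + 3 / 2 * \<eta>\<^sup>2 * C\<^sup>2 * (1 / (1 - q)) * (\<Sum>s\<le>t. q ^ (t - s) * (G s \<omega>)\<^sup>2)"
      by (simp add: A_def power_mult_distrib power_mult[symmetric] mult.commute[of 2])
    finally show ?thesis .
  qed
  have ptw: "(1 / real n) * Q \<omega> \<le> a0 + 3 * K * SN \<omega> + 9 * K * L\<^sup>2 * Q \<omega> + 9 * K * (real n * \<zeta>\<^sup>2) * real T + 9 * K * SR \<omega>"
    if AB: "\<forall>t. \<forall>i<n.
       norm ((1 / real n) *\<^sub>R (\<Sum>m<n. x t m \<omega>) - (1 / w t i) *\<^sub>R x t i \<omega>)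
       \<le> C * q ^ t * Max ((\<lambda>m. norm (x0 m)) ` {..<n})
         + \<eta> * C * (\<Sum>s\<le>t. q ^ (t - s) *
             Max ((\<lambda>j. norm (g j ((1 / w s j) *\<^sub>R x s j \<omega>) (\<xi> j s \<omega>))) ` {..<n}))" for \<omega>
  proof -
    define c1 where "c1 = 3 * C\<^sup>2 * X0\<^sup>2"
    define c2 where "c2 = 3 / 2 * \<eta>\<^sup>2 * C\<^sup>2 * (1 / (1 - q))"
    have c10: "0 \<le> c1" and c20: "0 \<le> c2" using q1 by (auto simp: c1_def c2_def)
    define bnd where "bnd = (\<lambda>t. c1 * q ^ (2 * t) + c2 * (\<Sum>s\<le>t. q ^ (t - s) * (G s \<omega>)\<^sup>2))"
    have ebt: "(e t i \<omega>)\<^sup>2 \<le> bnd t" if i: "i < n" for t i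
    proof -
      have "e t i \<omega> \<le> C * q ^ t * X0 + \<eta> * C * (\<Sum>s\<le>t. q ^ (t - s) * G s \<omega>)"
        using AB i by (simp add: e_def xb_def z_def G_def gg_def X0_def)
      from eb[OF this] show ?thesis by (simp add: bnd_def c1_def c2_def algebra_simps)
    qed
    have "Q \<omega> \<le> (\<Sum>t<T. \<Sum>i<n. bnd t)"
      unfolding Q_def using ebt by (intro sum_mono) auto
    also have "\<dots> = real n * (\<Sum>t<T. bnd t)" by (simp add: sum_distrib_left)
    finally have s1: "(1 / real n) * Q \<omega> \<le> (\<Sum>t<T. bnd t)" using nR by (simp add: field_simps)
    have s2: "(\<Sum>t<T. bnd t) = c1 * (\<Sum>t<T. q ^ (2 * t)) + c2 * (\<Sum>t<T. \<Sum>s\<le>t. q ^ (t - s) * (G s \<omega>)\<^sup>2)"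
      by (simp add: bnd_def sum.distrib sum_distrib_left)
    have s3: "c1 * (\<Sum>t<T. q ^ (2 * t)) \<le> a0"
    proof -
      have "c1 * (\<Sum>t<T. q ^ (2 * t)) \<le> c1 * (1 / (1 - q)\<^sup>2)"
        using c10 geo2[OF q0 q1] by (rule mult_left_mono[rotated])
      then show ?thesis by (simp add: a0_def c1_def)
    qed
    have s4: "c2 * (\<Sum>t<T. \<Sum>s\<le>t. q ^ (t - s) * (G s \<omega>)\<^sup>2) \<le> 3 / 2 * K * (\<Sum>s<T. (G s \<omega>)\<^sup>2)"
    proof -
      have "c2 * (\<Sum>t<T. \<Sum>s\<le>t. q ^ (t - s) * (G s \<omega>)\<^sup>2) \<le> c2 * (1 / (1 - q) * (\<Sum>s<T. (G s \<omega>)\<^sup>2))"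
        using c20 exch[OF q0 q1, of "\<lambda>s. (G s \<omega>)\<^sup>2" T] by (intro mult_left_mono) auto
      also have "\<dots> = 3 / 2 * K * (\<Sum>s<T. (G s \<omega>)\<^sup>2)"
        using q1 by (simp add: c2_def K_def power2_eq_square field_simps)
      finally show ?thesis .
    qed
    have s5: "(\<Sum>s<T. (G s \<omega>)\<^sup>2) \<le> 2 * SN \<omega> + 6 * L\<^sup>2 * Q \<omega> + 6 * (real n * \<zeta>\<^sup>2) * real T + 6 * SR \<omega>"
    proof -
      have "(\<Sum>s<T. (G s \<omega>)\<^sup>2) \<le> (\<Sum>s<T. 2 * Nn s \<omega> + 6 * L\<^sup>2 * (\<Sum>j<n. (e s j \<omega>)\<^sup>2) + 6 * (real n * \<zeta>\<^sup>2) + 6 * R s \<omega>)"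
        by (intro sum_mono Gb)
      also have "\<dots> = 2 * SN \<omega> + 6 * L\<^sup>2 * Q \<omega> + 6 * (real n * \<zeta>\<^sup>2) * real T + 6 * SR \<omega>"
        by (simp add: SN_def Q_def SR_def sum.distrib sum_distrib_left)
      finally show ?thesis .
    qed
    have "3 / 2 * K * (\<Sum>s<T. (G s \<omega>)\<^sup>2) \<le> 3 / 2 * K * (2 * SN \<omega> + 6 * L\<^sup>2 * Q \<omega> + 6 * (real n * \<zeta>\<^sup>2) * real T + 6 * SR \<omega>)"
      using K0 s5 by (intro mult_left_mono) auto
    then show ?thesis using s1 s2 s3 s4 by (simp add: algebra_simps)
  qed
  have Q_meas[measurable]: "Q \<in> borel_measurable M"
    unfolding Q_def using e_meas by (intro borel_measurable_sum borel_measurable_power) auto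
  have SN_meas[measurable]: "SN \<in> borel_measurable M"
    unfolding SN_def using Nn_meas by (intro borel_measurable_sum) auto
  have SR_meas[measurable]: "SR \<in> borel_measurable M"
    unfolding SR_def using R_meas by (intro borel_measurable_sum) auto
  note [measurable] = e_meas Nn_meas R_meas
  have e5: "ennreal (a1 + a2 + a3 + a4 + a5) = ennreal a1 + ennreal a2 + ennreal a3 + ennreal a4 + ennreal a5"
    if "0 \<le> a1" "0 \<le> a2" "0 \<le> a3" "0 \<le> a4" "0 \<le> a5" for a1 a2 a3 a4 a5 :: real
    using that by (simp add: ennreal_plus)
  have ptwE: "ennreal (1 / real n) * ennreal (Q \<omega>) \<le> ennreal a0 + ennreal (3 * K) * ennreal (SN \<omega>)
      + ennreal (9 * K * L\<^sup>2) * ennreal (Q \<omega>) + ennreal (9 * K * (real n * \<zeta>\<^sup>2) * real T)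
      + ennreal (9 * K) * ennreal (SR \<omega>)"
    if AB: "\<forall>t. \<forall>i<n.
       norm ((1 / real n) *\<^sub>R (\<Sum>m<n. x t m \<omega>) - (1 / w t i) *\<^sub>R x t i \<omega>)
       \<le> C * q ^ t * Max ((\<lambda>m. norm (x0 m)) ` {..<n})
         + \<eta> * C * (\<Sum>s\<le>t. q ^ (t - s) *
             Max ((\<lambda>j. norm (g j ((1 / w s j) *\<^sub>R x s j \<omega>) (\<xi> j s \<omega>))) ` {..<n}))" for \<omega>
  proof -
    have "ennreal ((1 / real n) * Q \<omega>) \<le> ennreal (a0 + 3 * K * SN \<omega> + 9 * K * L\<^sup>2 * Q \<omega> + 9 * K * (real n * \<zeta>\<^sup>2) * real T + 9 * K * SR \<omega>)"
      by (rule ennreal_leI[OF ptw[OF AB]])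
    also have "\<dots> = ennreal a0 + ennreal (3 * K * SN \<omega>) + ennreal (9 * K * L\<^sup>2 * Q \<omega>) + ennreal (9 * K * (real n * \<zeta>\<^sup>2) * real T) + ennreal (9 * K * SR \<omega>)"
      using a00 K0 SN0 Q0 SR0 by (intro e5) auto
    finally have fin: "ennreal ((1 / real n) * Q \<omega>) \<le> ennreal a0 + ennreal (3 * K * SN \<omega>) + ennreal (9 * K * L\<^sup>2 * Q \<omega>) + ennreal (9 * K * (real n * \<zeta>\<^sup>2) * real T) + ennreal (9 * K * SR \<omega>)" .
    have eqs: "ennreal (3 * K * SN \<omega>) = ennreal (3 * K) * ennreal (SN \<omega>)"
      "ennreal (9 * K * L\<^sup>2 * Q \<omega>) = ennreal (9 * K * L\<^sup>2) * ennreal (Q \<omega>)"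
      "ennreal (9 * K * SR \<omega>) = ennreal (9 * K) * ennreal (SR \<omega>)"
      "ennreal ((1 / real n) * Q \<omega>) = ennreal (1 / real n) * ennreal (Q \<omega>)"
      using K0 SN0 Q0 SR0 nR by (intro ennreal_mult; simp)+
    show ?thesis using fin unfolding eqs .
  qed
  have AEb: "AE \<omega> in M. ennreal (1 / real n) * ennreal (Q \<omega>) \<le> ennreal a0 + ennreal (3 * K) * ennreal (SN \<omega>)
      + ennreal (9 * K * L\<^sup>2) * ennreal (Q \<omega>) + ennreal (9 * K * (real n * \<zeta>\<^sup>2) * real T)
      + ennreal (9 * K) * ennreal (SR \<omega>)"
    using as_bound by eventually_elim (rule ptwE)
  define Lq where "Lq = (\<integral>\<^sup>+ \<omega>. ennreal (Q \<omega>) \<partial>M)"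
  define ISN where "ISN = (\<integral>\<^sup>+ \<omega>. ennreal (SN \<omega>) \<partial>M)"
  define Xg where "Xg = (\<integral>\<^sup>+ \<omega>. ennreal (SR \<omega>) \<partial>M)"
  have main: "ennreal (1 / real n) * Lq \<le> ennreal a0 + ennreal (3 * K) * ISN + ennreal (9 * K * L\<^sup>2) * Lq
      + ennreal (9 * K * (real n * \<zeta>\<^sup>2) * real T) + ennreal (9 * K) * Xg"
  proof -
    have "ennreal (1 / real n) * Lq = (\<integral>\<^sup>+ \<omega>. ennreal (1 / real n) * ennreal (Q \<omega>) \<partial>M)"
      unfolding Lq_def by (rule nn_integral_cmult[symmetric]) measurable
    also have "\<dots> \<le> (\<integral>\<^sup>+ \<omega>. ennreal a0 + ennreal (3 * K) * ennreal (SN \<omega>)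
      + ennreal (9 * K * L\<^sup>2) * ennreal (Q \<omega>) + ennreal (9 * K * (real n * \<zeta>\<^sup>2) * real T)
      + ennreal (9 * K) * ennreal (SR \<omega>) \<partial>M)"
      by (rule nn_integral_mono_AE[OF AEb])
    also have "\<dots> = ennreal a0 + ennreal (3 * K) * ISN + ennreal (9 * K * L\<^sup>2) * Lq
      + ennreal (9 * K * (real n * \<zeta>\<^sup>2) * real T) + ennreal (9 * K) * Xg"
      unfolding ISN_def Lq_def Xg_def
      apply (subst nn_integral_add, measurable)+
      apply (subst nn_integral_cmult, measurable)+
      apply (simp add: emeasure_space_1)
      done
    finally show ?thesis .
  qed
  have Lq_eq: "Lq = (\<Sum>t<T. \<Sum>i<n. \<integral>\<^sup>+ \<omega>. ennreal ((e t i \<omega>)\<^sup>2) \<partial>M)"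
  proof -
    have "(\<Sum>t<T. \<Sum>i<n. \<integral>\<^sup>+ \<omega>. ennreal ((e t i \<omega>)\<^sup>2) \<partial>M) = (\<Sum>t<T. \<integral>\<^sup>+ \<omega>. (\<Sum>i<n. ennreal ((e t i \<omega>)\<^sup>2)) \<partial>M)"
      by (intro sum.cong refl nn_integral_sum[symmetric]) measurable
    also have "\<dots> = (\<integral>\<^sup>+ \<omega>. (\<Sum>t<T. \<Sum>i<n. ennreal ((e t i \<omega>)\<^sup>2)) \<partial>M)"
      by (rule nn_integral_sum[symmetric]) measurable
    also have "\<dots> = Lq" unfolding Lq_def Q_def by (simp add: sum_nonneg)
    finally show ?thesis by simp
  qed
  have Lq_fin: "Lq < \<infinity>" unfolding Lq_eq using e_fin by (simp add: less_top)
  have ISN_le: "ISN \<le> ennreal (real T * (real n * \<sigma>\<^sup>2))"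
  proof -
    have Nb: "(\<integral>\<^sup>+ \<omega>. ennreal (Nn s \<omega>) \<partial>M) \<le> ennreal (real n * \<sigma>\<^sup>2)" for s
    proof -
      have "(\<integral>\<^sup>+ \<omega>. ennreal (Nn s \<omega>) \<partial>M) = (\<integral>\<^sup>+ \<omega>. (\<Sum>j<n. ennreal ((norm (gg s j \<omega> - Df j (z s j \<omega>)))\<^sup>2)) \<partial>M)"
        by (simp add: Nn_def)
      also have "\<dots> = (\<Sum>j<n. \<integral>\<^sup>+ \<omega>. ennreal ((norm (gg s j \<omega> - Df j (z s j \<omega>)))\<^sup>2) \<partial>M)"
      proof (rule nn_integral_sum)
        fix j assume "j \<in> {..<n}" then have j: "j < n" by simp
        note [measurable] = gg_meas[OF j] Df_meas[OF j]
        show "(\<lambda>\<omega>. ennreal ((norm (gg s j \<omega> - Df j (z s j \<omega>)))\<^sup>2)) \<in> borel_measurable M" by measurable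
      qed
      also have "\<dots> \<le> (\<Sum>j<n. ennreal (\<sigma>\<^sup>2))" by (intro sum_mono noise) auto
      also have "\<dots> = ennreal (real n * \<sigma>\<^sup>2)"
        by (subst ennreal_mult) (auto simp: ennreal_of_nat_eq_real_of_nat)
      finally show ?thesis .
    qed
    have "ISN = (\<Sum>s<T. \<integral>\<^sup>+ \<omega>. ennreal (Nn s \<omega>) \<partial>M)"
    proof -
      have "ISN = (\<integral>\<^sup>+ \<omega>. (\<Sum>s<T. ennreal (Nn s \<omega>)) \<partial>M)" unfolding ISN_def SN_def
        using Nn0 by (simp add: sum_nonneg)
      also have "\<dots> = (\<Sum>s<T. \<integral>\<^sup>+ \<omega>. ennreal (Nn s \<omega>) \<partial>M)" by (rule nn_integral_sum) measurable
      finally show ?thesis .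
    qed
    also have "\<dots> \<le> (\<Sum>s<T. ennreal (real n * \<sigma>\<^sup>2))" by (intro sum_mono Nb)
    also have "\<dots> = ennreal (real T * (real n * \<sigma>\<^sup>2))"
      by (subst ennreal_mult) (auto simp: ennreal_of_nat_eq_real_of_nat)
    finally show ?thesis .
  qed
  have Xg_eq: "Xg = (\<Sum>s<T. \<integral>\<^sup>+ \<omega>. ennreal (R s \<omega>) \<partial>M)"
  proof -
    have "Xg = (\<integral>\<^sup>+ \<omega>. (\<Sum>s<T. ennreal (R s \<omega>)) \<partial>M)" unfolding Xg_def SR_def
      using R0 by (simp add: sum_nonneg)
    also have "\<dots> = (\<Sum>s<T. \<integral>\<^sup>+ \<omega>. ennreal (R s \<omega>) \<partial>M)" by (rule nn_integral_sum) measurable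
    finally show ?thesis .
  qed
  have main2: "ennreal (1 / real n) * Lq \<le> ennreal a0 + ennreal (3 * K * (real T * (real n * \<sigma>\<^sup>2))) + ennreal (9 * K * L\<^sup>2) * Lq
      + ennreal (9 * K * (real n * \<zeta>\<^sup>2) * real T) + ennreal (9 * K) * Xg"
  proof -
    have "ennreal (3 * K) * ISN \<le> ennreal (3 * K) * ennreal (real T * (real n * \<sigma>\<^sup>2))"
      by (rule mult_left_mono[OF ISN_le]) simp
    also have "\<dots> = ennreal (3 * K * (real T * (real n * \<sigma>\<^sup>2)))" using K0 by (simp add: ennreal_mult)
    finally have "ennreal (3 * K) * ISN \<le> ennreal (3 * K * (real T * (real n * \<sigma>\<^sup>2)))" .
    then show ?thesis using main by (meson add_mono order_refl order_trans)
  qed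
  have Pd: "P = 1 - 9 * K * L\<^sup>2 * real n"
    using q1 unfolding P_def K_def by (simp add: field_simps)
  have fa: "ennreal (1 / real n) * Lq \<le> ennreal (a0 / P) + ennreal (3 * K * (real T * (real n * \<sigma>\<^sup>2)) / P)
      + ennreal (9 * K * (real n * \<zeta>\<^sup>2) * real T / P) + ennreal (9 * K / P) * Xg"
    by (rule final_arith[OF Lq_fin a00 _ _ _ _ nR P_pos Pd main2]) (use K0 in auto)
  have g1: "3 * C\<^sup>2 / (P * (1 - q)\<^sup>2) * (Max ((\<lambda>m. norm (x0 m)) ` {..<n}))\<^sup>2 = a0 / P"
    using q1 P_pos by (simp add: a0_def X0_def field_simps)
  have g2: "3 * \<eta>\<^sup>2 * C\<^sup>2 * real n * \<sigma>\<^sup>2 / (P * (1 - q)\<^sup>2) * real T = 3 * K * (real T * (real n * \<sigma>\<^sup>2)) / P"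
    using q1 P_pos by (simp add: K_def field_simps)
  have g3: "9 * \<eta>\<^sup>2 * C\<^sup>2 * real n * \<zeta>\<^sup>2 / (P * (1 - q)\<^sup>2) * real T = 9 * K * (real n * \<zeta>\<^sup>2) * real T / P"
    using q1 P_pos by (simp add: K_def field_simps)
  have g4: "9 * \<eta>\<^sup>2 * C\<^sup>2 / (P * (1 - q)\<^sup>2) = 9 * K / P"
    using q1 P_pos by (simp add: K_def field_simps)
  have g5: "(\<Sum>t<T. \<integral>\<^sup>+ \<omega>. ennreal ((norm ((1 / real n) *\<^sub>R
            (\<Sum>k<n. Df k ((1 / real n) *\<^sub>R (\<Sum>m<n. x t m \<omega>)))))\<^sup>2) \<partial>M) = Xg"
    unfolding Xg_eq R_def gf_def xb_def ..
  have g6: "(\<Sum>t<T. ennreal (1 / real n) * (\<Sum>i<n. \<integral>\<^sup>+ \<omega>.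
            ennreal ((norm ((1 / real n) *\<^sub>R (\<Sum>m<n. x t m \<omega>) - (1 / w t i) *\<^sub>R x t i \<omega>))\<^sup>2) \<partial>M))
      = ennreal (1 / real n) * Lq"
    unfolding Lq_eq e_def xb_def z_def by (simp add: sum_distrib_left)
  show ?thesis unfolding g1 g2 g3 g4 g5 g6 by (rule fa)
qed

end
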